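(* Let $m,n,a,d\in\mathbb{N}$. Let $X_1,\dots,X_m$ be i.i.d. random variables uniformly distributed on $\{1,2,\dots,a\}$ and $Y_1,\dots,Y_n$ i.i.d. random variables uniformly distributed on $\{1,2,\dots,d\}$, independent of the $X_i$. Let $X^{(1)}$ denote the largest of $X_1,\dots,X_m$ and $Y^{(1)}$ the largest of $Y_1,\dots,Y_n$. Then \[ \Pr\left(X^{(1)}>Y^{(1)}\right)=\sum_{y=1}^{\min\{a,d\}}\frac{(a^m-y^m)(y^n-(y-1)^n)}{a^{m}d^{n}}. \]
   Context: The $X_i$ are the faces shown by $m$ attacker dice with $a$ sides and the $Y_j$ the faces of $n$ defender dice with $d$ sides. In the paper's notation, the event $X^{(1)}>Y^{(1)}$ is written $\{X_i\}_m>_{1,1}\{Y_j\}_n$ (exactly one of the one comparison $X^{(1)}>Y^{(1)}$ holds; ties go to the defender). *)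

theory Defs
  imports "HOL-Probability.Probability"
begin

definition dice_pmf :: "nat \<Rightarrow> nat \<Rightarrow> (nat \<Rightarrow> nat) pmf" where
  "dice_pmf k s = Pi_pmf {..<k} 0 (\<lambda>_. pmf_of_set {1..s})"

end

theory Submission
  imports Defs
begin

lemma dice_cdf:
  assumes "k \<ge> 1" "s \<ge> 1"
  shows "measure_pmf.prob (map_pmf (\<lambda>X. Max (X ` {..<k})) (dice_pmf k s)) {..t}
         = real (min t s) ^ k / real s ^ k"
proof -
  have "(\<lambda>X. Max (X ` {..<k})) -` {..t} = Pi {..<k} (\<lambda>_. {..t})"
    proof -
    have "0 \<in> {..<k}" using assms by simp
    hence ne: "{..<k} \<noteq> {}" by blast
    show ?thesis
      by (auto simp: Pi_def Max_le_iff[OF finite_imageI[OF finite_lessThan]] ne)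
  qed
  hence "measure_pmf.prob (map_pmf (\<lambda>X. Max (X ` {..<k})) (dice_pmf k s)) {..t}
      = (\<Prod>x\<in>{..<k}. measure_pmf.prob (pmf_of_set {1..s}) {..t})"
    unfolding dice_pmf_def by (simp add: measure_Pi_pmf_Pi)
  also have "measure_pmf.prob (pmf_of_set {1..s}) {..t} = real (min t s) / real s"
  proof -
    have "{1..s} \<inter> {..t} = {1..min t s}" by auto
    thus ?thesis using assms by (simp add: measure_pmf_of_set)
  qed
  finally show ?thesis by (simp add: power_divide)
qed

lemma dice_set:
  fixes k s :: nat
  assumes "k \<ge> 1" "s \<ge> 1"
  shows "set_pmf (map_pmf (\<lambda>X. Max (X ` {..<k})) (dice_pmf k s)) \<subseteq> {..s}"
proof
  fix u assume "u \<in> set_pmf (map_pmf (\<lambda>X. Max (X ` {..<k})) (dice_pmf k s))"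
  then obtain X where X: "X \<in> set_pmf (dice_pmf k s)" "u = Max (X ` {..<k})" by auto
  have "X \<in> PiE_dflt {..<k} 0 (set_pmf \<circ> (\<lambda>_. pmf_of_set {1..s}))"
    using X(1) set_Pi_pmf_subset'[of "{..<k}" 0 "\<lambda>_. pmf_of_set {1..s}"] unfolding dice_pmf_def
    by blast
  moreover have "set_pmf (pmf_of_set {1..s}) = {1..s}" using assms by (simp add: set_pmf_of_set)
  ultimately have Xs: "\<forall>i<k. X i \<le> s" by (auto simp: PiE_dflt_def)
  have "0 \<in> {..<k}" using assms by simp
  hence ne: "{..<k} \<noteq> {}" by blast
  show "u \<in> {..s}" using X(2) Xs by (simp add: Max_le_iff[OF finite_imageI[OF finite_lessThan]] ne)
qed

lemma tail:
  fixes k s v :: nat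
  assumes "k \<ge> 1" "s \<ge> 1"
  shows "measure_pmf.prob (map_pmf (\<lambda>X. Max (X ` {..<k})) (dice_pmf k s)) {v<..s}
         = 1 - real (min v s) ^ k / real s ^ k"
proof -
  let ?U = "map_pmf (\<lambda>X. Max (X ` {..<k})) (dice_pmf k s)"
  have one: "measure_pmf.prob ?U {..s} = 1" using dice_cdf[OF assms, of s] assms by simp
  show ?thesis
  proof (cases "v \<le> s")
    case True
    have "{..s} = {..v} \<union> {v<..s}" using True by auto
    hence "measure_pmf.prob ?U {..s} = measure_pmf.prob ?U {..v} + measure_pmf.prob ?U {v<..s}"
      by (simp only:) (rule measure_pmf.finite_measure_Union, auto)
    thus ?thesis using one dice_cdf[OF assms, of v] by simp
  next
    case False
    hence "{v<..s} = {}" by auto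
    thus ?thesis using False assms by simp
  qed
qed

lemma point:
  fixes k s v :: nat
  assumes "k \<ge> 1" "s \<ge> 1" "v \<ge> 1"
  shows "pmf (map_pmf (\<lambda>X. Max (X ` {..<k})) (dice_pmf k s)) v
         = real (min v s) ^ k / real s ^ k - real (min (v - 1) s) ^ k / real s ^ k"
proof -
  let ?U = "map_pmf (\<lambda>X. Max (X ` {..<k})) (dice_pmf k s)"
  have eq: "{..v} = {..v-1} \<union> {v}" using assms by auto
  have disj: "{..v-1} \<inter> {v} = {}" using assms by auto
  have "measure_pmf.prob ?U {..v} = measure_pmf.prob ?U {..v-1} + measure_pmf.prob ?U {v}"
    by (simp only: eq) (rule measure_pmf.finite_measure_Union, use assms in \<open>auto simp: disj\<close>)
  thus ?thesis using dice_cdf[OF assms(1,2), of v] dice_cdf[OF assms(1,2), of "v-1"]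
    by (simp add: measure_pmf_single)
qed

lemma point0:
  fixes k s :: nat
  assumes "k \<ge> 1" "s \<ge> 1"
  shows "pmf (map_pmf (\<lambda>X. Max (X ` {..<k})) (dice_pmf k s)) 0 = 0"
  using dice_cdf[OF assms, of 0] assms by (simp add: measure_pmf_single[symmetric])

theorem proposition6p1:
  fixes m n a d :: nat
  assumes "m \<ge> 1" and "n \<ge> 1" and "a \<ge> 1" and "d \<ge> 1"
  shows "measure_pmf.prob (pair_pmf (dice_pmf m a) (dice_pmf n d))
           {(X, Y). Max (X ` {..<m}) > Max (Y ` {..<n})}
         = (\<Sum>y = 1..min a d. (real a ^ m - real y ^ m) * (real y ^ n - (real y - 1) ^ n)
                                / (real a ^ m * real d ^ n))"
proof -
  define U where "U = map_pmf (\<lambda>X. Max (X ` {..<m})) (dice_pmf m a)"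
  define V where "V = map_pmf (\<lambda>X. Max (X ` {..<n})) (dice_pmf n d)"
  define T where "T = prod.swap ` Sigma {0..d} (\<lambda>v. {v<..a})"
  have "measure_pmf.prob (pair_pmf (dice_pmf m a) (dice_pmf n d))
           {(X, Y). Max (X ` {..<m}) > Max (Y ` {..<n})}
      = measure_pmf.prob (map_pmf (\<lambda>(X, Y). (Max (X ` {..<m}), Max (Y ` {..<n})))
           (pair_pmf (dice_pmf m a) (dice_pmf n d))) {(u, v). v < u}"
    by (simp add: vimage_def case_prod_unfold)
  also have "\<dots> = measure_pmf.prob (pair_pmf U V) {(u, v). v < u}"
    unfolding U_def V_def map_pair ..
  also have "\<dots> = measure_pmf.prob (pair_pmf U V) ({(u, v). v < u} \<inter> set_pmf (pair_pmf U V))"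
    by (rule measure_Int_set_pmf[symmetric])
  also have "{(u, v). v < u} \<inter> set_pmf (pair_pmf U V) = T \<inter> set_pmf (pair_pmf U V)"
    using dice_set[OF assms(1,3)] dice_set[OF assms(2,4)] unfolding U_def[symmetric] V_def[symmetric]
    by (auto simp: T_def)
  also have "measure_pmf.prob (pair_pmf U V) (T \<inter> set_pmf (pair_pmf U V)) = measure_pmf.prob (pair_pmf U V) T"
    by (rule measure_Int_set_pmf)
  also have "\<dots> = (\<Sum>p\<in>T. pmf (pair_pmf U V) p)"
    by (rule measure_measure_pmf_finite) (simp add: T_def)
  also have "\<dots> = (\<Sum>v\<in>{0..d}. \<Sum>u\<in>{v<..a}. pmf U u * pmf V v)"
    unfolding T_def
    apply (subst sum.reindex, simp)
    apply (subst sum.Sigma, simp, simp)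
    apply (rule sum.cong[OF refl])
    apply (auto simp: pmf_pair)
    done
  also have "\<dots> = (\<Sum>v\<in>{0..d}. pmf V v * measure_pmf.prob U {v<..a})"
    by (simp add: measure_measure_pmf_finite sum_distrib_left mult.commute)
  also have "\<dots> = (\<Sum>v\<in>{1..d}. pmf V v * measure_pmf.prob U {v<..a})"
  proof -
    have "{0..d} = insert 0 {1..d}" by auto
    thus ?thesis using point0[OF assms(2,4)] by (simp add: V_def)
  qed
  also have "\<dots> = (\<Sum>v\<in>{1..d}. (real v ^ n - (real v - 1) ^ n) / real d ^ n * (1 - real (min v a) ^ m / real a ^ m))"
  proof (rule sum.cong[OF refl])
    fix v assume v: "v \<in> {1..d}"
    have mv: "min (v - 1) d = v - 1" "real (v - 1) = real v - 1" using v by auto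
    have "pmf V v = (real v ^ n - (real v - 1) ^ n) / real d ^ n"
      using mv point[OF assms(2,4), of v] v by (simp add: V_def of_nat_diff diff_divide_distrib)
    thus "pmf V v * measure_pmf.prob U {v<..a} = (real v ^ n - (real v - 1) ^ n) / real d ^ n * (1 - real (min v a) ^ m / real a ^ m)"
      using tail[OF assms(1,3), of v] by (simp add: U_def)
  qed
  also have "\<dots> = (\<Sum>y = 1..min a d. (real a ^ m - real y ^ m) * (real y ^ n - (real y - 1) ^ n)
                                / (real a ^ m * real d ^ n))"
  proof (rule sum.mono_neutral_cong_right)
    show "finite {1..d}" by simp
    show "{1..min a d} \<subseteq> {1..d}" by auto
    show "\<forall>i\<in>{1..d} - {1..min a d}. (real i ^ n - (real i - 1) ^ n) / real d ^ n * (1 - real (min i a) ^ m / real a ^ m) = 0"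
      using assms by auto
    show "(real x ^ n - (real x - 1) ^ n) / real d ^ n * (1 - real (min x a) ^ m / real a ^ m) =
         (real a ^ m - real x ^ m) * (real x ^ n - (real x - 1) ^ n) / (real a ^ m * real d ^ n)"
      if "x \<in> {1..min a d}" for x
      using that assms by (simp add: field_simps)
  qed
  finally show ?thesis .
qed

end
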